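(* Consider the block hyper-$g$ regression model with blocks $X_1,\dots,X_k$ ($X_i$ of size $n\times p_i$) satisfying the block orthogonality condition below, and the sequence of problems $\Psi_N$ with data $y_N=\alpha\mathbf 1+X_1\beta_{1(N)}+X_2\beta_2+\dots+X_k\beta_k+\epsilon$, where $X_1,\dots,X_k,\alpha,\beta_2,\dots,\beta_k,\epsilon$ are held fixed and $\|\beta_{1(N)}\|\to\infty$ as $N\to\infty$. Then, as $N\to\infty$, $R_1^2\to1$ and $R_i^2\to0$ for all $i\neq1$.
   Context: Block hyper-$g$ prior with hyperparameter $2<a\le4$: $y\mid\alpha,\beta,\sigma^2\sim N(\alpha\mathbf 1+X\beta,\sigma^2I)$ with $X=(X_1,\dots,X_k)$ of full column rank, $\beta=(\beta_1^T,\dots,\beta_k^T)^T$; $\beta\mid g,\sigma^2\sim N(0,A\sigma^2)$ with $A$ block diagonal with blocks $g_i(X_i^TX_i)^{-1}$; $\pi(\alpha,\sigma^2)\propto1/\sigma^2$; $g_1,\dots,g_k$ independent with densities $\frac{a-2}{2}(1+g_i)^{-a/2}$, $g_i>0$. Block orthogonality condition: the predictors and the response are centered ($\mathbf 1^TX_i=0$, $\mathbf 1^Ty=0$) and $X_i^TX_j=0$ for $i\ne j$. $R_i^2=y^TP_{X_i}y/y^Ty$, where $P_{X_i}$ is the orthogonal projection onto the column space of $X_i$; $n>p+1$ with $p=\sum_ip_i$. *)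

theory Defs
  imports "HOL-Analysis.Analysis"
begin

text \<open>Observations live in R^n, represented as real^'n (n = CARD('n)).
  A block X_i is given by its columns: col i j :: real^'n for j < p i.\<close>

definition block_mult :: "(nat \<Rightarrow> real^'n) \<Rightarrow> nat \<Rightarrow> (nat \<Rightarrow> real) \<Rightarrow> real^'n" where
  "block_mult c q b = (\<Sum>j<q. b j *\<^sub>R c j)"

definition orth_proj :: "('a::euclidean_space) set \<Rightarrow> 'a \<Rightarrow> 'a" where
  "orth_proj S y = (THE q. q \<in> span S \<and> (\<forall>w\<in>span S. (y - q) \<bullet> w = 0))"

definition Rsq :: "(nat \<Rightarrow> real^'n) \<Rightarrow> nat \<Rightarrow> real^'n \<Rightarrow> real" where
  "Rsq c q y = (y \<bullet> orth_proj (c ` {..<q}) y) / (y \<bullet> y)"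

definition ones :: "real^'n" where "ones = (\<chi> a. 1)"

end

theory Submission
  imports Defs
begin
lemma proj_unique:
  fixes S :: "('a::euclidean_space) set"
  assumes q: "q \<in> span S" and o: "\<forall>w\<in>span S. (y - q) \<bullet> w = 0"
  shows "orth_proj S y = q"
  unfolding orth_proj_def
proof (rule the_equality)
  show "q \<in> span S \<and> (\<forall>w\<in>span S. (y - q) \<bullet> w = 0)" using q o by blast
next
  fix q' assume h: "q' \<in> span S \<and> (\<forall>w\<in>span S. (y - q') \<bullet> w = 0)"
  have d: "q - q' \<in> span S" using q h span_diff by blast
  have "(y - q') \<bullet> (q - q') = 0" "(y - q) \<bullet> (q - q') = 0" using h o d by auto
  then have "(q - q') \<bullet> (q - q') = 0" by (simp add: inner_diff_left inner_diff_right)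
  then show "q' = q" by simp
qed

lemma proj_prop:
  fixes S :: "('a::euclidean_space) set"
  shows "orth_proj S y \<in> span S \<and> (\<forall>w\<in>span S. (y - orth_proj S y) \<bullet> w = 0)"
proof -
  obtain a z where a: "a \<in> span S" and z: "\<And>w. w \<in> span S \<Longrightarrow> orthogonal z w" and e: "y = a + z"
    using orthogonal_subspace_decomp_exists by blast
  have o: "\<forall>w\<in>span S. (y - a) \<bullet> w = 0" using z e by (simp add: orthogonal_def)
  have "orth_proj S y = a" by (rule proj_unique[OF a o])
  then show ?thesis using a o by simp
qed

lemma proj_inner:
  fixes S :: "('a::euclidean_space) set"
  shows "y \<bullet> orth_proj S y = (norm (orth_proj S y))^2"
proof -
  let ?q = "orth_proj S y"
  have "(y - ?q) \<bullet> ?q = 0" using proj_prop[of S y] by blast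
  then show ?thesis by (simp add: inner_diff_left power2_norm_eq_inner)
qed

lemma proj_add:
  fixes S :: "('a::euclidean_space) set"
  shows "orth_proj S (u + v) = orth_proj S u + orth_proj S v"
proof (rule proj_unique)
  show "orth_proj S u + orth_proj S v \<in> span S" using proj_prop span_add by blast
  show "\<forall>w\<in>span S. (u + v - (orth_proj S u + orth_proj S v)) \<bullet> w = 0"
  proof
    fix w assume w: "w \<in> span S"
    have "(u - orth_proj S u) \<bullet> w = 0" "(v - orth_proj S v) \<bullet> w = 0" using proj_prop w by blast+
    then show "(u + v - (orth_proj S u + orth_proj S v)) \<bullet> w = 0"
      by (simp add: inner_diff_left inner_add_left)
  qed
qed

lemma proj_span:
  fixes S :: "('a::euclidean_space) set"
  assumes "u \<in> span S" shows "orth_proj S u = u"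
  using assms by (intro proj_unique) auto

lemma proj_orth:
  fixes S :: "('a::euclidean_space) set"
  assumes "\<And>w. w \<in> S \<Longrightarrow> u \<bullet> w = 0" shows "orth_proj S u = 0"
proof (rule proj_unique)
  show "0 \<in> span S" by (rule span_zero)
  show "\<forall>w\<in>span S. (u - 0) \<bullet> w = 0"
  proof
    fix w assume w: "w \<in> span S"
    have "orthogonal u w" by (rule orthogonal_to_span[OF w]) (use assms in \<open>simp add: orthogonal_def\<close>)
    then show "(u - 0) \<bullet> w = 0" by (simp add: orthogonal_def)
  qed
qed

lemma proj_norm:
  fixes S :: "('a::euclidean_space) set"
  shows "norm (orth_proj S y) \<le> norm y"
proof -
  let ?q = "orth_proj S y"
  have o: "(y - ?q) \<bullet> ?q = 0" using proj_prop[of S y] by blast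
  have "y \<bullet> y = ?q \<bullet> ?q + (y - ?q) \<bullet> (y - ?q)"
    using o by (simp add: inner_diff_left inner_diff_right inner_commute)
  then have "(norm ?q)^2 \<le> (norm y)^2" by (simp add: power2_norm_eq_inner)
  then show ?thesis using power2_le_imp_le norm_ge_zero by blast
qed

lemma norm_ratio_lim:
  fixes u :: "nat \<Rightarrow> 'a::real_normed_vector"
  assumes t: "filterlim (\<lambda>N. norm (u N)) at_top sequentially"
  shows "(\<lambda>N. norm (u N + a) / norm (u N)) \<longlonglongrightarrow> 1"
proof (rule LIM_zero_cancel, rule Lim_null_comparison)
  have ev: "\<forall>\<^sub>F N in sequentially. norm (u N) > 0"
    using t unfolding filterlim_at_top_dense by (metis (no_types, lifting) eventually_mono zero_less_norm_iff)
  show "\<forall>\<^sub>F N in sequentially. norm (norm (u N + a) / norm (u N) - 1) \<le> norm a / norm (u N)"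
    using ev
  proof eventually_elim
    case (elim N)
    have "norm (u N + a) / norm (u N) - 1 = (norm (u N + a) - norm (u N)) / norm (u N)"
      using elim by (simp add: field_simps)
    moreover have "\<bar>norm (u N + a) - norm (u N)\<bar> \<le> norm a"
      using norm_triangle_ineq3[of "u N + a" "u N"] by simp
    ultimately show ?case using elim by (simp add: abs_divide divide_right_mono)
  qed
  show "(\<lambda>N. norm a / norm (u N)) \<longlonglongrightarrow> 0"
    by (rule tendsto_divide_0[OF tendsto_const filterlim_at_top_imp_at_infinity[OF t]])
qed

theorem lemma4p1:
  fixes k :: nat and p :: "nat \<Rightarrow> nat"
    and col :: "nat \<Rightarrow> nat \<Rightarrow> real^'n"
    and \<alpha> :: real and \<beta> :: "nat \<Rightarrow> nat \<Rightarrow> real"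
    and b1 :: "nat \<Rightarrow> nat \<Rightarrow> real"
    and \<epsilon> :: "real^'n"
    and y :: "nat \<Rightarrow> real^'n"
  assumes k: "k \<ge> 1"
    and n_gt: "CARD('n) > (\<Sum>i=1..k. p i) + 1"
    and full_rank: "\<And>c. (\<Sum>i=1..k. block_mult (col i) (p i) (c i)) = 0 \<Longrightarrow>
                      \<forall>i\<in>{1..k}. \<forall>j<p i. c i j = 0"
    and centered_X: "\<And>i j. i \<in> {1..k} \<Longrightarrow> j < p i \<Longrightarrow> ones \<bullet> col i j = 0"
    and orth: "\<And>i j a b. i \<in> {1..k} \<Longrightarrow> j \<in> {1..k} \<Longrightarrow> i \<noteq> j \<Longrightarrow>
                 a < p i \<Longrightarrow> b < p j \<Longrightarrow> col i a \<bullet> col j b = 0"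
    and y_def: "\<And>N. y N = \<alpha> *\<^sub>R ones + block_mult (col 1) (p 1) (b1 N)
                   + (\<Sum>i=2..k. block_mult (col i) (p i) (\<beta> i)) + \<epsilon>"
    and centered_y: "\<And>N. ones \<bullet> y N = 0"
    and diverge: "filterlim (\<lambda>N. sqrt (\<Sum>j<p 1. (b1 N j)\<^sup>2)) at_top sequentially"
  shows "(\<lambda>N. Rsq (col 1) (p 1) (y N)) \<longlonglongrightarrow> 1
         \<and> (\<forall>i\<in>{2..k}. (\<lambda>N. Rsq (col i) (p i) (y N)) \<longlonglongrightarrow> 0)"
proof -
  define w where "w = \<alpha> *\<^sub>R ones + (\<Sum>i=2..k. block_mult (col i) (p i) (\<beta> i)) + \<epsilon>"
  define u where "u N = block_mult (col 1) (p 1) (b1 N)" for N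
  define S where "S i = col i ` {..<p i}" for i
  have yuw: "y N = u N + w" for N using y_def[of N] by (simp add: u_def w_def algebra_simps)
  have bm_span: "block_mult (col i) (p i) d \<in> span (S i)" for i d
    unfolding block_mult_def S_def
    by (intro span_sum span_scale span_base) auto
  have fr1: "\<forall>j<p 1. d j = 0" if h: "block_mult (col 1) (p 1) d = 0" for d
  proof -
    define c where "c i = (if i = 1 then d else (\<lambda>_. 0))" for i :: nat
    have "(\<Sum>i=1..k. block_mult (col i) (p i) (c i)) = block_mult (col 1) (p 1) (c 1)
           + (\<Sum>i\<in>{1..k}-{1}. block_mult (col i) (p i) (c i))"
      using k by (intro sum.remove) auto
    also have "(\<Sum>i\<in>{1..k}-{1}. block_mult (col i) (p i) (c i)) = 0"
      by (intro sum.neutral) (auto simp: c_def block_mult_def)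
    finally have z: "(\<Sum>i=1..k. block_mult (col i) (p i) (c i)) = 0" using h by (simp add: c_def)
    have "\<forall>j<p 1. c 1 j = 0" using bspec[OF full_rank[OF z], of 1] k by simp
    then show ?thesis by (simp add: c_def)
  qed
  have inj: "inj_on (col 1) {..<p 1}"
  proof (rule inj_onI, rule ccontr)
    fix a b assume a: "a \<in> {..<p 1}" and b: "b \<in> {..<p 1}" and e: "col 1 a = col 1 b" and ne: "a \<noteq> b"
    define d where "d j = (if j = a then 1 else 0) - (if j = b then 1 else (0::real))" for j
    have "block_mult (col 1) (p 1) d
        = (\<Sum>j<p 1. (if j = a then col 1 j else 0)) - (\<Sum>j<p 1. (if j = b then col 1 j else 0))"
      unfolding block_mult_def sum_subtractf[symmetric]
      by (intro sum.cong) (auto simp: d_def scaleR_left_diff_distrib)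
    also have "\<dots> = 0" using a b e by simp
    finally have "d a = 0" using fr1 a by auto
    then show False using ne by (simp add: d_def)
  qed
  have indep: "independent (S 1)"
  proof
    assume "dependent (S 1)"
    then obtain c where c1: "\<exists>v\<in>S 1. c v \<noteq> 0" and c2: "(\<Sum>v\<in>S 1. c v *\<^sub>R v) = 0"
      using dependent_finite[of "S 1"] by (auto simp: S_def)
    have "(\<Sum>v\<in>S 1. c v *\<^sub>R v) = block_mult (col 1) (p 1) (\<lambda>j. c (col 1 j))"
      unfolding S_def block_mult_def using sum.reindex[OF inj, of "\<lambda>v. c v *\<^sub>R v"] by simp
    then have "block_mult (col 1) (p 1) (\<lambda>j. c (col 1 j)) = 0" using c2 by simp
    then have "\<forall>j<p 1. c (col 1 j) = 0" by (rule fr1)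
    then show False using c1 by (auto simp: S_def)
  qed
  have gex: "\<exists>g. linear g \<and> (\<forall>i<p 1. g (col 1 i) = (if i = j then 1 else (0::real)))" if j: "j < p 1" for j
  proof -
    obtain g :: "real^'n \<Rightarrow> real" where g: "linear g" "\<forall>x\<in>S 1. g x = (if x = col 1 j then 1 else 0)"
      using linear_independent_extend[OF indep, of "\<lambda>x. if x = col 1 j then 1 else (0::real)"] by blast
    have "g (col 1 i) = (if i = j then 1 else 0)" if i: "i < p 1" for i
    proof -
      have "col 1 i \<in> S 1" using i by (simp add: S_def)
      then have "g (col 1 i) = (if col 1 i = col 1 j then 1 else 0)" using g(2) by blast
      moreover have "(col 1 i = col 1 j) = (i = j)" using inj_on_eq_iff[OF inj] i j by simp
      ultimately show ?thesis by simp
    qed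
    then show ?thesis using g(1) by blast
  qed
  have bex: "\<exists>B>0. \<forall>d. \<bar>d j\<bar> \<le> B * norm (block_mult (col 1) (p 1) d)" if j: "j < p 1" for j
  proof -
    obtain g where g: "linear g" "\<forall>i<p 1. g (col 1 i) = (if i = j then 1 else (0::real))"
      using gex[OF j] by blast
    obtain B where B: "B > 0" "\<And>x. norm (g x) \<le> B * norm x" using linear_bounded_pos[OF g(1)] by blast
    have gd: "g (block_mult (col 1) (p 1) d) = d j" for d
    proof -
      have "g (block_mult (col 1) (p 1) d) = (\<Sum>i<p 1. d i * g (col 1 i))"
        unfolding block_mult_def by (simp add: linear_sum[OF g(1)] linear_scale[OF g(1)])
      also have "\<dots> = (\<Sum>i<p 1. if i = j then d i else 0)" using g(2) by (intro sum.cong) auto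
      also have "\<dots> = d j" using j by simp
      finally show ?thesis .
    qed
    have "\<forall>d. \<bar>d j\<bar> \<le> B * norm (block_mult (col 1) (p 1) d)"
    proof
      fix d
      have "norm (g (block_mult (col 1) (p 1) d)) \<le> B * norm (block_mult (col 1) (p 1) d)" by (rule B(2))
      then show "\<bar>d j\<bar> \<le> B * norm (block_mult (col 1) (p 1) d)" by (simp only: gd real_norm_def)
    qed
    then show ?thesis using B(1) by blast
  qed
  have "\<forall>j. \<exists>Bj. j < p 1 \<longrightarrow> Bj > 0 \<and> (\<forall>d. \<bar>d j\<bar> \<le> Bj * norm (block_mult (col 1) (p 1) d))"
  proof
    fix j show "\<exists>Bj. j < p 1 \<longrightarrow> Bj > 0 \<and> (\<forall>d. \<bar>d j\<bar> \<le> Bj * norm (block_mult (col 1) (p 1) d))"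
    proof (cases "j < p 1")
      case True then show ?thesis using bex[OF True] by blast
    qed auto
  qed
  from choice[OF this] obtain B where B: "\<And>j. j < p 1 \<Longrightarrow> B j > 0 \<and> (\<forall>d. \<bar>d j\<bar> \<le> B j * norm (block_mult (col 1) (p 1) d))"
    by blast
  define K where "K = sqrt (\<Sum>j<p 1. (B j)^2) + 1"
  have "sqrt (\<Sum>j<p 1. (B j)^2) \<ge> 0" by (intro real_sqrt_ge_zero sum_nonneg) auto
  then have Kpos: "K > 0" unfolding K_def by linarith
  have lower: "sqrt (\<Sum>j<p 1. (b1 N j)\<^sup>2) \<le> K * norm (u N)" for N
  proof -
    have "(\<Sum>j<p 1. (b1 N j)\<^sup>2) \<le> (\<Sum>j<p 1. (B j * norm (u N))\<^sup>2)"
    proof (intro sum_mono)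
      fix j assume "j \<in> {..<p 1}"
      then have "\<bar>b1 N j\<bar> \<le> B j * norm (u N)" using B[of j] by (auto simp: u_def)
      then have "\<bar>b1 N j\<bar>\<^sup>2 \<le> (B j * norm (u N))\<^sup>2"
        by (intro power_mono) auto
      then show "(b1 N j)\<^sup>2 \<le> (B j * norm (u N))\<^sup>2" by simp
    qed
    also have "\<dots> = (norm (u N))\<^sup>2 * (\<Sum>j<p 1. (B j)^2)"
      by (simp add: power_mult_distrib sum_distrib_left mult.commute)
    finally have "sqrt (\<Sum>j<p 1. (b1 N j)\<^sup>2) \<le> sqrt ((norm (u N))\<^sup>2 * (\<Sum>j<p 1. (B j)^2))"
      using real_sqrt_le_mono by blast
    also have "\<dots> = norm (u N) * sqrt (\<Sum>j<p 1. (B j)^2)" by (simp add: real_sqrt_mult)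
    also have "\<dots> \<le> K * norm (u N)" by (simp add: K_def algebra_simps)
    finally show ?thesis .
  qed
  have unorm: "filterlim (\<lambda>N. norm (u N)) at_top sequentially"
  proof (rule filterlim_at_top_mono)
    show "filterlim (\<lambda>N. (1/K) * sqrt (\<Sum>j<p 1. (b1 N j)\<^sup>2)) at_top sequentially"
      by (rule filterlim_tendsto_pos_mult_at_top[OF tendsto_const _ diverge]) (simp add: Kpos)
    show "\<forall>\<^sub>F N in sequentially. (1/K) * sqrt (\<Sum>j<p 1. (b1 N j)\<^sup>2) \<le> norm (u N)"
    proof (intro always_eventually allI)
      fix N
      have "sqrt (\<Sum>j<p 1. (b1 N j)\<^sup>2) / K \<le> norm (u N)"
        using lower[of N] Kpos by (simp add: pos_divide_le_eq mult.commute)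
      then show "(1/K) * sqrt (\<Sum>j<p 1. (b1 N j)\<^sup>2) \<le> norm (u N)" by simp
    qed
  qed
  have evpos: "\<forall>\<^sub>F N in sequentially. norm (u N) > 0"
    using unorm unfolding filterlim_at_top_dense by blast
  have yy: "y N \<bullet> y N = (norm (u N + w))^2" for N by (simp add: yuw power2_norm_eq_inner)
  have P1: "orth_proj (S 1) (y N) = u N + orth_proj (S 1) w" for N
  proof -
    have "orth_proj (S 1) (u N) = u N" unfolding u_def by (rule proj_span[OF bm_span])
    then show ?thesis by (simp only: yuw proj_add)
  qed
  have R1: "Rsq (col 1) (p 1) (y N) = (norm (u N + orth_proj (S 1) w))^2 / (norm (u N + w))^2" for N
    unfolding Rsq_def using proj_inner[of "y N" "S 1"] P1[of N] yy[of N] by (simp add: S_def)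
  have l1: "(\<lambda>N. (norm (u N + orth_proj (S 1) w) / norm (u N))^2 / (norm (u N + w) / norm (u N))^2)
            \<longlonglongrightarrow> 1^2 / 1^2"
    by (intro tendsto_intros norm_ratio_lim[OF unorm]) simp
  then have l1': "(\<lambda>N. (norm (u N + orth_proj (S 1) w) / norm (u N))^2 / (norm (u N + w) / norm (u N))^2)
            \<longlonglongrightarrow> 1" by (simp only: power_one div_by_1)
  have c1: "(\<lambda>N. Rsq (col 1) (p 1) (y N)) \<longlonglongrightarrow> 1"
  proof (rule Lim_transform_eventually[OF l1'])
    show "\<forall>\<^sub>F N in sequentially. (norm (u N + orth_proj (S 1) w) / norm (u N))^2 / (norm (u N + w) / norm (u N))^2
           = Rsq (col 1) (p 1) (y N)"
    proof (rule eventually_mono[OF evpos])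
      fix N assume pos: "norm (u N) > 0"
      show "(norm (u N + orth_proj (S 1) w) / norm (u N))^2 / (norm (u N + w) / norm (u N))^2
           = Rsq (col 1) (p 1) (y N)"
        unfolding R1 using pos by (simp add: power_divide)
    qed
  qed
  have c2: "(\<lambda>N. Rsq (col i) (p i) (y N)) \<longlonglongrightarrow> 0" if i: "i \<in> {2..k}" for i
  proof -
    have "u N \<bullet> v = 0" if v: "v \<in> S i" for N v
    proof -
      obtain b where b: "b < p i" "v = col i b" using v by (auto simp: S_def)
      show ?thesis unfolding u_def block_mult_def b(2) inner_sum_left
        using orth[of 1 i _ b] i k b(1) by (intro sum.neutral) auto
    qed
    then have uo: "orth_proj (S i) (u N) = 0" for N by (intro proj_orth) blast
    have Pi: "orth_proj (S i) (y N) = orth_proj (S i) w" for N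
      by (simp only: yuw proj_add uo add_0_left)
    have Ri: "Rsq (col i) (p i) (y N) = (norm (orth_proj (S i) w))^2 / (norm (u N + w))^2" for N
      unfolding Rsq_def using proj_inner[of "y N" "S i"] Pi[of N] yy[of N] by (simp add: S_def)
    have "filterlim (\<lambda>N. norm (u N + w)) at_top sequentially"
    proof (rule filterlim_at_top_mono)
      show "filterlim (\<lambda>N. (- norm w) + norm (u N)) at_top sequentially"
        by (rule filterlim_tendsto_add_at_top[OF tendsto_const unorm])
      show "\<forall>\<^sub>F N in sequentially. (- norm w) + norm (u N) \<le> norm (u N + w)"
      proof (intro always_eventually allI)
        fix N show "(- norm w) + norm (u N) \<le> norm (u N + w)"
          using norm_diff_ineq[of "u N" w] by simp
      qed
    qed
    then have "filterlim (\<lambda>N. (norm (u N + w))^2) at_infinity sequentially"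
      by (intro filterlim_at_top_imp_at_infinity filterlim_pow_at_top) auto
    then have "(\<lambda>N. (norm (orth_proj (S i) w))^2 / (norm (u N + w))^2) \<longlonglongrightarrow> 0"
      by (rule tendsto_divide_0[OF tendsto_const])
    then show ?thesis by (simp add: Ri)
  qed
  show ?thesis using c1 c2 by blast
qed

end
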